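(* In the real plane with Euclidean coordinates $(x,y)$, let $\Gamma$ be a circle, and let $C_1=[1:0:0]$ and $C_2=[\alpha:1:0]$, with $\alpha\ge 0$, be points on the line at infinity (so the line $C_1C_2$ is disjoint from $\Gamma$); let $\mathcal{C}^*$ be the singular dual conic given by $C_1,C_2$. Then the polygonal lines inscribed in $\Gamma$ and circumscribed about $\mathcal{C}^*$ satisfy: (i) there are no such closed polygons with an odd number of sides; (ii) such a polygonal line is closed with $2n$ sides if and only if $$\arctan\left(\frac{1}{\alpha}\right)\in\left\{\frac{k\pi}{n}\ \middle|\ 1\le k<n,\ \gcd(k,n)=1\right\}.$$
   Context: The singular dual conic $\mathcal{C}^*$ given by two distinct points $C_1,C_2$ is the union of the pencils of lines through $C_1$ and through $C_2$; here lines through $C_1$ are the lines parallel to the direction $(1,0)$ and lines through $C_2$ are the lines parallel to the direction $(\alpha,1)$. A polygonal line $A_1A_2\dots$ is inscribed in $\Gamma$ and circumscribed about $\mathcal{C}^*$ if all vertices lie on $\Gamma$ and the sides alternately pass through $C_1$ and $C_2$; it is closed with $N$ sides if $A_{N+1}=A_1$. For $\alpha=0$, $\arctan(1/\alpha)$ is understood as $\pi/2$. *)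

theory Defs
  imports "HOL-Analysis.Analysis"
begin

text \<open>The circle Gamma is
  sphere c r with r > 0. The point C1 = [1:0:0] at infinity corresponds to the
  direction (1,0), the point C2 = [alpha:1:0] to the direction (alpha,1); a line
  passes through such a point at infinity iff it is parallel to that direction.\<close>

definition dirC1 :: "real \<times> real" where
  "dirC1 = (1, 0)"

definition dirC2 :: "real \<Rightarrow> real \<times> real" where
  "dirC2 \<alpha> = (\<alpha>, 1)"

definition line_through_dir :: "real \<times> real \<Rightarrow> real \<times> real \<Rightarrow> real \<times> real \<Rightarrow> bool" where
  "line_through_dir P Q d \<longleftrightarrow> P \<noteq> Q \<and> (\<exists>t::real. Q - P = t *\<^sub>R d)"

text \<open>A polygonal line A_1 A_2 ... (indexed from 1) inscribed in the circle
  sphere c r and circumscribed about the singular dual conic given by C1, C2: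
  all vertices lie on the circle and the sides A_i A_{i+1} alternately pass
  through C1 and C2 (starting with either of them).\<close>
definition inscr_circ :: "real \<times> real \<Rightarrow> real \<Rightarrow> real \<Rightarrow> (nat \<Rightarrow> real \<times> real) \<Rightarrow> bool" where
  "inscr_circ c r \<alpha> A \<longleftrightarrow>
     (\<forall>i\<ge>1. A i \<in> sphere c r) \<and>
     (\<exists>s::nat. s \<le> 1 \<and>
        (\<forall>i\<ge>1. line_through_dir (A i) (A (i+1))
                    (if even (i + s) then dirC2 \<alpha> else dirC1)))"

definition closed_with :: "(nat \<Rightarrow> real \<times> real) \<Rightarrow> nat \<Rightarrow> bool" where
  "closed_with A N \<longleftrightarrow> N \<ge> 1 \<and> A (N + 1) = A 1 \<and> (\<forall>j. 1 \<le> j \<and> j < N \<longrightarrow> A (j + 1) \<noteq> A 1)"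

definition arctan_inv :: "real \<Rightarrow> real" where
  "arctan_inv \<alpha> = (if \<alpha> = 0 then pi / 2 else arctan (1 / \<alpha>))"

end

theory Submission
  imports Defs
begin

definition cplx :: "real \<times> real \<Rightarrow> complex" where
  "cplx p = Complex (fst p) (snd p)"

lemma cplx_inj: "cplx p = cplx q \<Longrightarrow> p = q"
  by (auto simp: cplx_def complex_eq_iff prod_eq_iff)

lemma sph: assumes "dist c P = r" shows "(fst (P - c))^2 + (snd (P - c))^2 = r^2"
proof -
  have "r = norm (P - c)" using assms by (simp add: dist_norm norm_minus_commute)
  also have "norm (P - c) = sqrt ((fst (P - c))^2 + (snd (P - c))^2)"
    by (metis norm_Pair prod.collapse real_norm_def power2_abs)
  finally show ?thesis by simp
qed

lemma refl_gen:
  fixes x y x' y' t d1 d2 :: real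
  assumes "x^2+y^2 = x'^2+y'^2" "x' = x + t*d1" "y' = y + t*d2" "t \<noteq> 0" "d1^2+d2^2 > 0"
  shows "t = -2*(x*d1+y*d2)/(d1^2+d2^2)"
proof -
  have "t * (2*(x*d1+y*d2) + t*(d1^2+d2^2)) = 0"
    using assms(1-3) by (simp add: power2_eq_square algebra_simps)
  then have "2*(x*d1+y*d2) + t*(d1^2+d2^2) = 0" using assms(4) by (simp add: zero_prod_def)
  then have "t*(d1^2+d2^2) = -2*(x*d1+y*d2)" by linarith
  moreover have D: "d1^2+d2^2 \<noteq> 0" by (metis assms(5) order_less_irrefl)
  ultimately show ?thesis by (simp add: nonzero_eq_divide_eq[OF D] del: divide_minus_left)
qed

definition omg :: "real \<Rightarrow> complex" where
  "omg a = Complex ((a^2 - 1)/(a^2+1)) (2*a/(a^2+1))"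

lemma omg_cnj: "omg a * cnj (omg a) = 1"
proof -
  have p: "a^2+1 > 0" by (simp add: add_nonneg_pos)
  have "((a^2 - 1)/(a^2+1))^2 + (2*a/(a^2+1))^2 = ((a^2-1)^2 + (2*a)^2)/(a^2+1)^2"
    by (simp add: power_divide add_divide_distrib)
  also have "(a^2-1)^2 + (2*a)^2 = (a^2+1)^2" by (simp add: power2_eq_square algebra_simps)
  finally have "((a^2 - 1)/(a^2+1))^2 + (2*a/(a^2+1))^2 = 1" using p by simp
  then show ?thesis by (simp add: complex_eq_iff power2_eq_square omg_def)
qed

lemma step1:
  assumes "dist c P = r" "dist c Q = r" "P \<noteq> Q" "Q - P = t *\<^sub>R (1::real, 0::real)"
  shows "cplx (Q - c) = - cnj (cplx (P - c))"
proof -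
  define x y x' y' where "x = fst (P - c)" "y = snd (P - c)" "x' = fst (Q - c)" "y' = snd (Q - c)"
  have e: "x^2+y^2 = x'^2+y'^2" using sph[OF assms(1)] sph[OF assms(2)] x_y_x'_y'_def by simp
  have h1: "x' = x + t*1" "y' = y + t*0" using assms(4) unfolding x_y_x'_y'_def
    by (auto simp: prod_eq_iff algebra_simps)
  have "t \<noteq> 0"
  proof
    assume "t = 0" then have "Q - P = 0" using assms(4) by (simp add: zero_prod_def)
    then show False using assms(3) by simp
  qed
  from refl_gen[OF e h1 this] have "t = -2*x" by simp
  then show ?thesis using h1 by (simp add: cplx_def complex_eq_iff x_y_x'_y'_def)
qed

lemma step2:
  assumes "dist c P = r" "dist c Q = r" "P \<noteq> Q" "Q - P = t *\<^sub>R (a, 1::real)"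
  shows "cplx (Q - c) = - omg a * cnj (cplx (P - c))"
proof -
  define x y x' y' where "x = fst (P - c)" "y = snd (P - c)" "x' = fst (Q - c)" "y' = snd (Q - c)"
  have e: "x^2+y^2 = x'^2+y'^2" using sph[OF assms(1)] sph[OF assms(2)] x_y_x'_y'_def by simp
  have h1: "x' = x + t*a" "y' = y + t*1" using assms(4) unfolding x_y_x'_y'_def
    by (auto simp: prod_eq_iff algebra_simps)
  have "t \<noteq> 0"
  proof
    assume "t = 0" then have "Q - P = 0" using assms(4) by (simp add: zero_prod_def)
    then show False using assms(3) by simp
  qed
  have p: "a^2+1 > 0" by (simp add: add_nonneg_pos)
  from refl_gen[OF e h1 \<open>t \<noteq> 0\<close>] p have t: "t = -2*(x*a+y)/(a^2+1)" by simp
  have c1: "cplx (Q - c) = Complex x' y'" "cplx (P - c) = Complex x y"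
    by (simp_all add: cplx_def x_y_x'_y'_def)
  define N where "N = a^2+1"
  have N0: "N \<noteq> 0" using p N_def by simp
  have tN: "t * N = -2*(x*a+y)" using t N0 N_def by simp
  have "(x + t*a) * N = (- ((a^2 - 1)/(a^2+1) * x + 2*a/(a^2+1) * y)) * N"
  proof -
    have "(x + t*a) * N = x*N + (t*N)*a" by (simp add: algebra_simps)
    also have "... = x*N + (-2*(x*a+y))*a" by (simp only: tN)
    also have "... = - ((a^2 - 1) * x + 2*a * y)" unfolding N_def by (simp add: algebra_simps power2_eq_square)
    also have "... = (- ((a^2 - 1)/(a^2+1) * x + 2*a/(a^2+1) * y)) * N"
      using N0 unfolding N_def[symmetric] by (simp add: field_simps)
    finally show ?thesis .
  qed
  then have r1: "x + t*a = - ((a^2 - 1)/(a^2+1) * x + 2*a/(a^2+1) * y)" using N0 by simp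
  have "(y + t*1) * N = (- (2*a/(a^2+1) * x - (a^2 - 1)/(a^2+1) * y)) * N"
  proof -
    have "(y + t*1) * N = y*N + (t*N)" by (simp add: algebra_simps)
    also have "... = y*N + (-2*(x*a+y))" by (simp only: tN)
    also have "... = - (2*a * x - (a^2 - 1) * y)" unfolding N_def by (simp add: algebra_simps power2_eq_square)
    also have "... = (- (2*a/(a^2+1) * x - (a^2 - 1)/(a^2+1) * y)) * N"
      using N0 unfolding N_def[symmetric] by (simp add: field_simps)
    finally show ?thesis .
  qed
  then have r2: "y + t*1 = - (2*a/(a^2+1) * x - (a^2 - 1)/(a^2+1) * y)" using N0 by simp
  show ?thesis unfolding c1 using r1 r2 h1 by (simp add: complex_eq_iff omg_def)
qed


definition tau :: "real \<Rightarrow> nat \<Rightarrow> nat \<Rightarrow> complex \<Rightarrow> complex" where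
  "tau a s i w = (if even (i + s) then - omg a * cnj w else - cnj w)"

lemma tau_inv: "tau a s i (tau a s i w) = w"
proof -
  have "omg a * cnj (omg a) * w = w" by (simp add: omg_cnj)
  then show ?thesis by (simp add: tau_def algebra_simps)
qed

definition rhoc :: "real \<Rightarrow> nat \<Rightarrow> complex" where
  "rhoc a s = (if s = 0 then omg a else cnj (omg a))"

locale polyg =
  fixes c :: "real \<times> real" and r a :: real and A :: "nat \<Rightarrow> real \<times> real" and s :: nat
  assumes rpos: "r > 0" and s1: "s \<le> 1"
    and sph: "\<forall>i\<ge>1. A i \<in> sphere c r"
    and lns: "\<forall>i\<ge>1. line_through_dir (A i) (A (i+1)) (if even (i + s) then dirC2 a else dirC1)"
begin

definition z :: "nat \<Rightarrow> complex" where "z i = cplx (A i - c)"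

lemma zA: "A i = A j \<longleftrightarrow> z i = z j"
proof
  assume "z i = z j"
  then have "A i - c = A j - c" unfolding z_def by (rule cplx_inj)
  then show "A i = A j" by simp
qed (simp add: z_def)

lemma zstep: assumes "i \<ge> 1" shows "z (i+1) = tau a s i (z i)"
proof -
  have d1: "dist c (A i) = r" "dist c (A (i+1)) = r" using sph assms by auto
  have l: "line_through_dir (A i) (A (i+1)) (if even (i + s) then dirC2 a else dirC1)"
    using lns assms by auto
  show ?thesis
  proof (cases "even (i + s)")
    case True
    with l obtain t where "A i \<noteq> A (i+1)" "A (i+1) - A i = t *\<^sub>R (a, 1)"
      by (auto simp: line_through_dir_def dirC2_def)
    from step2[OF d1 this] True show ?thesis by (simp add: z_def tau_def)
  next
    case False
    with l obtain t where "A i \<noteq> A (i+1)" "A (i+1) - A i = t *\<^sub>R (1, 0)"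
      by (auto simp: line_through_dir_def dirC1_def)
    from step1[OF d1 this] False show ?thesis by (simp add: z_def tau_def)
  qed
qed

lemma zback: assumes "i \<ge> 1" shows "z i = tau a s i (z (i+1))"
  using zstep[OF assms] tau_inv by simp

lemma znd: assumes "i \<ge> 1" shows "z (i+1) \<noteq> z i"
proof -
  have "A i \<noteq> A (i+1)" using lns assms by (auto simp: line_through_dir_def)
  then show ?thesis using zA by metis
qed

lemma tau_par: assumes "even (i + j)" shows "tau a s i = tau a s j"
proof -
  have "even (i+s) \<longleftrightarrow> even (j+s)" using assms by presburger
  then show ?thesis unfolding tau_def by simp
qed

lemma zodd: "z (2*m+2) \<noteq> z 1"
proof
  assume h: "z (2*m+2) = z 1"
  have "p \<le> m \<Longrightarrow> z (1+p) = z (2*m+2-p)" for p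
  proof (induction p)
    case 0 then show ?case using h by simp
  next
    case (Suc p)
    then have e: "z (1+p) = z (2*m+2-p)" by simp
    have "z (1 + Suc p) = tau a s (1+p) (z (1+p))" using zstep[of "1+p"] by simp
    also have "... = tau a s (2*m+1-p) (z (2*m+2-p))"
    proof -
      have "even (1+p + (2*m+1-p))" using Suc.prems by presburger
      then show ?thesis using e tau_par[of "1+p" "2*m+1-p"] by simp
    qed
    also have "... = z (2*m+1-p)"
    proof -
      have q: "2*m+2-p = (2*m+1-p)+1" "2*m+1-p \<ge> 1" using Suc.prems by auto
      show ?thesis unfolding q(1) using zback[OF q(2)] by simp
    qed
    also have "2*m+1-p = 2*m+2 - Suc p" by simp
    finally show ?case .
  qed
  from this[of m] have "z (m+1) = z (m+2)" by (simp add: add.commute)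
  with znd[of "m+1"] show False by simp
qed


lemma rho_step: "tau a s 2 (tau a s 1 w) = rhoc a s * w"
proof (cases "s = 0")
  case True then show ?thesis by (simp add: tau_def rhoc_def)
next
  case False then have "s = 1" using s1 by simp
  then show ?thesis by (simp add: tau_def rhoc_def)
qed

lemma zpow: "z (2*k+1) = (rhoc a s)^k * z 1"
proof (induction k)
  case 0 then show ?case by simp
next
  case (Suc k)
  have "z (2*Suc k + 1) = tau a s (2*k+2) (tau a s (2*k+1) (z (2*k+1)))"
    using zstep[of "2*k+1"] zstep[of "2*k+2"] by (simp add: numeral_2_eq_2)
  also have "... = tau a s 2 (tau a s 1 (z (2*k+1)))"
    using tau_par[of "2*k+2" 2] tau_par[of "2*k+1" 1] by simp
  also have "... = (rhoc a s)^Suc k * z 1" using Suc.IH rho_step by simp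
  finally show ?case .
qed

lemma z1nz: "z 1 \<noteq> 0"
proof
  assume "z 1 = 0"
  then have "A 1 - c = 0" unfolding z_def cplx_def by (simp add: complex_eq_iff prod_eq_iff)
  then have "A 1 = c" by simp
  moreover have "dist c (A 1) = r" using sph by auto
  ultimately show False using rpos by simp
qed

lemma closed_iff: "closed_with A (2*n) \<longleftrightarrow> n \<ge> 1 \<and> (rhoc a s)^n = 1 \<and> (\<forall>k. 1 \<le> k \<and> k < n \<longrightarrow> (rhoc a s)^k \<noteq> 1)"
proof -
  have pw: "A (2*k+1) = A 1 \<longleftrightarrow> (rhoc a s)^k = 1" for k
    using zA[of "2*k+1" 1] zpow[of k] z1nz by (metis mult_cancel_right2)
  have od: "(\<forall>m. 1 \<le> m \<and> m < 2*n \<longrightarrow> A (m+1) \<noteq> A 1) \<longleftrightarrow> (\<forall>k. 1 \<le> k \<and> k < n \<longrightarrow> (rhoc a s)^k \<noteq> 1)"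
  proof
    assume H: "\<forall>m. 1 \<le> m \<and> m < 2*n \<longrightarrow> A (m+1) \<noteq> A 1"
    show "\<forall>k. 1 \<le> k \<and> k < n \<longrightarrow> (rhoc a s)^k \<noteq> 1"
    proof (intro allI impI)
      fix k assume k: "1 \<le> k \<and> k < n"
      then have "1 \<le> 2*k \<and> 2*k < 2*n" by simp
      then have "A (2*k+1) \<noteq> A 1" using H by blast
      then show "(rhoc a s)^k \<noteq> 1" using pw by simp
    qed
  next
    assume H: "\<forall>k. 1 \<le> k \<and> k < n \<longrightarrow> (rhoc a s)^k \<noteq> 1"
    show "\<forall>m. 1 \<le> m \<and> m < 2*n \<longrightarrow> A (m+1) \<noteq> A 1"
    proof (intro allI impI)
      fix m assume m: "1 \<le> m \<and> m < 2*n"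
      show "A (m+1) \<noteq> A 1"
      proof (cases "even m")
        case True
        then obtain k where k: "m = 2*k" by blast
        then show ?thesis using H m pw[of k] by auto
      next
        case False
        then obtain k where k: "m = 2*k+1" using oddE by blast
        then show ?thesis using zodd[of k] zA by simp
      qed
    qed
  qed
  show ?thesis unfolding closed_with_def using pw[of n] od by auto
qed

end

lemma cs_theta:
  assumes "a \<ge> 0"
  shows "cos (arctan_inv a) = a / sqrt (a^2+1) \<and> sin (arctan_inv a) = 1 / sqrt (a^2+1)"
proof (cases "a = 0")
  case True then show ?thesis by (simp add: arctan_inv_def)
next
  case False
  then have ap: "a > 0" using assms by simp
  have sq: "sqrt (1 + (1/a)^2) = sqrt (a^2+1) / a"
  proof -
    have "1 + (1/a)^2 = (a^2+1) / a^2" using ap by (simp add: field_simps)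
    then have "sqrt (1 + (1/a)^2) = sqrt (a^2+1) / sqrt (a^2)" by (simp add: real_sqrt_divide)
    then show ?thesis using ap by simp
  qed
  have p: "sqrt (a^2+1) > 0" by (simp add: add_nonneg_pos)
  have e: "arctan_inv a = arctan (1/a)" using False by (simp add: arctan_inv_def)
  have "cos (arctan_inv a) = 1 / (sqrt (a^2+1) / a)" unfolding e cos_arctan sq ..
  also have "... = a / sqrt (a^2+1)" using ap p by simp
  finally have 1: "cos (arctan_inv a) = a / sqrt (a^2+1)" .
  have "sin (arctan_inv a) = (1/a) / (sqrt (a^2+1) / a)" unfolding e sin_arctan sq ..
  also have "... = 1 / sqrt (a^2+1)" using ap p by simp
  finally show ?thesis using 1 by simp
qed

lemma omg_cis: assumes "a \<ge> 0" shows "omg a = cis (2 * arctan_inv a)"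
proof -
  define th where "th = arctan_inv a"
  have c: "cos th = a / sqrt (a^2+1)" and s: "sin th = 1 / sqrt (a^2+1)"
    using cs_theta[OF assms] th_def by auto
  have q: "(sqrt (a^2+1))^2 = a^2+1" by (simp add: add_nonneg_nonneg)
  have "cos (2*th) = (a^2 - 1)/(a^2+1)"
    unfolding cos_double c s by (simp add: power_divide q diff_divide_distrib)
  moreover have "sin (2*th) = 2*a/(a^2+1)"
    unfolding sin_double c s by (simp add: power2_eq_square[symmetric] q)
  ultimately show ?thesis unfolding th_def[symmetric] by (simp add: omg_def complex_eq_iff)
qed

lemma cis_one: "cis x = 1 \<longleftrightarrow> cos x = 1"
proof
  assume "cos x = 1"
  moreover have "(sin x)^2 + (cos x)^2 = 1" by simp
  ultimately have "sin x = 0" by simp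
  with \<open>cos x = 1\<close> show "cis x = 1" by (simp add: complex_eq_iff)
qed (simp add: complex_eq_iff)

lemma omg_pow_one: assumes "a \<ge> 0"
  shows "(omg a)^k = 1 \<longleftrightarrow> (\<exists>j::int. real k * arctan_inv a = real_of_int j * pi)"
proof -
  have "(omg a)^k = cis (real k * (2 * arctan_inv a))" by (subst omg_cis[OF assms]) (rule Complex.DeMoivre)
  then have "(omg a)^k = 1 \<longleftrightarrow> cos (real k * (2 * arctan_inv a)) = 1" by (simp add: cis_one)
  also have "... \<longleftrightarrow> (\<exists>j::int. real k * (2 * arctan_inv a) = real_of_int j * 2 * pi)" by (rule cos_one_2pi_int)
  also have "... \<longleftrightarrow> (\<exists>j::int. real k * arctan_inv a = real_of_int j * pi)" by auto
  finally show ?thesis .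
qed

lemma theta_bounds: assumes "a \<ge> 0" shows "0 < arctan_inv a \<and> arctan_inv a \<le> pi/2"
proof (cases "a = 0")
  case True then show ?thesis by (simp add: arctan_inv_def)
next
  case False
  then have "a > 0" using assms by simp
  then show ?thesis using arctan_ubound[of "1/a"] arctan_less_zero_iff[of "1/a"] arctan_eq_zero_iff[of "1/a"]
    by (auto simp: arctan_inv_def)
qed

lemma nt:
  fixes th :: real
  assumes "0 < th" "th \<le> pi/2"
  shows "(n \<ge> 1 \<and> (\<exists>j::int. real n * th = real_of_int j * pi) \<and>
          (\<forall>k. 1 \<le> k \<and> k < n \<longrightarrow> \<not> (\<exists>j::int. real k * th = real_of_int j * pi)))
     \<longleftrightarrow> th \<in> {real k * pi / real n | k::nat. 1 \<le> k \<and> k < n \<and> gcd k n = 1}"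
proof
  assume H: "n \<ge> 1 \<and> (\<exists>j::int. real n * th = real_of_int j * pi) \<and>
          (\<forall>k. 1 \<le> k \<and> k < n \<longrightarrow> \<not> (\<exists>j::int. real k * th = real_of_int j * pi))"
  then obtain j :: int where j: "real n * th = real_of_int j * pi" by blast
  have n1: "n \<ge> 1" using H by simp
  have "real_of_int j * pi > 0" using j[symmetric] n1 assms(1) by simp
  then have jp: "j > 0" by (simp add: zero_less_mult_iff)
  have "real n * th \<le> real n * (pi/2)" using assms(2) by (rule mult_left_mono) simp
  then have "real_of_int j * pi \<le> real n * (pi/2)" using j by simp
  also have "... < real n * pi" using n1 by simp
  finally have "real_of_int j < real n" by simp
  then have jn: "j < int n" by simp
  define k where "k = nat j"
  have kj: "real k = real_of_int j" using jp k_def by simp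
  have th: "th = real k * pi / real n" using j kj n1 by (simp add: field_simps)
  have g: "gcd k n = 1"
  proof (rule ccontr)
    assume ng: "gcd k n \<noteq> 1"
    define g where "g = gcd k n"
    have g0: "g > 0" using n1 g_def by simp
    have g2: "g \<ge> 2" using g0 ng g_def by linarith
    obtain n' where n': "n = n' * g" using g_def by (metis gcd_dvd2 dvd_def mult.commute)
    obtain k' where k': "k = k' * g" using g_def by (metis gcd_dvd1 dvd_def mult.commute)
    have "n' \<ge> 1" using n' n1 by (cases n') auto
    moreover have "n' < n" using n' g2 n1 \<open>n' \<ge> 1\<close> by (simp add: n')
    moreover have "real n' * th = real_of_int (int k') * pi"
      using th n' k' g0 n1 by (simp add: field_simps)
    ultimately show False using H by blast
  qed
  have "1 \<le> k \<and> k < n" using jp jn k_def by auto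
  then show "th \<in> {real k * pi / real n | k::nat. 1 \<le> k \<and> k < n \<and> gcd k n = 1}"
    using th g by auto
next
  assume "th \<in> {real k * pi / real n | k::nat. 1 \<le> k \<and> k < n \<and> gcd k n = 1}"
  then obtain k where k: "th = real k * pi / real n" "1 \<le> k" "k < n" "gcd k n = 1" by auto
  have n1: "n \<ge> 1" using k by simp
  have "real n * th = real_of_int (int k) * pi" using k n1 by simp
  moreover have "\<not> (\<exists>j::int. real m * th = real_of_int j * pi)" if m: "1 \<le> m" "m < n" for m
  proof
    assume "\<exists>j::int. real m * th = real_of_int j * pi"
    then obtain j :: int where "real m * th = real_of_int j * pi" by blast
    then have "real m * real k = real_of_int j * real n" using k n1 by (simp add: field_simps)
    then have "int m * int k = j * int n" by (metis of_int_eq_iff of_int_mult of_int_of_nat_eq)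
    then have "int n dvd int m * int k" by simp
    moreover have "coprime (int n) (int k)" using k(4) by (simp add: coprime_iff_gcd_eq_1 gcd.commute)
    ultimately have "int n dvd int m" using coprime_dvd_mult_left_iff by blast
    then have "n dvd m" by simp
    then show False using m by (simp add: nat_dvd_not_less)
  qed
  ultimately show "n \<ge> 1 \<and> (\<exists>j::int. real n * th = real_of_int j * pi) \<and>
          (\<forall>k. 1 \<le> k \<and> k < n \<longrightarrow> \<not> (\<exists>j::int. real k * th = real_of_int j * pi))"
    using n1 by blast
qed


lemma rhoc_pow: "(rhoc a s)^k = 1 \<longleftrightarrow> (omg a)^k = 1"
proof (cases "s = 0")
  case False
  have "(rhoc a s)^k = cnj ((omg a)^k)" using False by (simp add: rhoc_def)
  moreover have "cnj y = 1 \<longleftrightarrow> y = 1" for y by (metis complex_cnj_cnj complex_cnj_one)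
  ultimately show ?thesis by metis
qed (simp add: rhoc_def)

theorem proposition3p7:
  fixes c :: "real \<times> real" and r \<alpha> :: real and A :: "nat \<Rightarrow> real \<times> real"
  assumes "r > 0" and "\<alpha> \<ge> 0" and "inscr_circ c r \<alpha> A"
  shows "(\<forall>m::nat. \<not> closed_with A (2 * m + 1)) \<and>
         (\<forall>n::nat. closed_with A (2 * n) \<longleftrightarrow>
           arctan_inv \<alpha> \<in> {real k * pi / real n | k::nat. 1 \<le> k \<and> k < n \<and> gcd k n = 1})"
proof -
  obtain s where s: "s \<le> 1"
    "\<forall>i\<ge>1. line_through_dir (A i) (A (i+1)) (if even (i + s) then dirC2 \<alpha> else dirC1)"
    and sp: "\<forall>i\<ge>1. A i \<in> sphere c r"
    using assms(3) unfolding inscr_circ_def by blast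
  interpret P: polyg c r \<alpha> A s using assms(1) s sp by unfold_locales auto
  have i: "\<not> closed_with A (2 * m + 1)" for m
  proof
    assume "closed_with A (2 * m + 1)"
    then have "A (2*m+2) = A 1" unfolding closed_with_def by (simp add: add.assoc)
    then show False using P.zodd[of m] P.zA by simp
  qed
  have ii: "closed_with A (2 * n) \<longleftrightarrow>
           arctan_inv \<alpha> \<in> {real k * pi / real n | k::nat. 1 \<le> k \<and> k < n \<and> gcd k n = 1}" for n
  proof -
    have "closed_with A (2 * n) \<longleftrightarrow> n \<ge> 1 \<and> (rhoc \<alpha> s)^n = 1 \<and> (\<forall>k. 1 \<le> k \<and> k < n \<longrightarrow> (rhoc \<alpha> s)^k \<noteq> 1)"
      by (rule P.closed_iff)
    also have "... \<longleftrightarrow> (n \<ge> 1 \<and> (\<exists>j::int. real n * arctan_inv \<alpha> = real_of_int j * pi) \<and>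
          (\<forall>k. 1 \<le> k \<and> k < n \<longrightarrow> \<not> (\<exists>j::int. real k * arctan_inv \<alpha> = real_of_int j * pi)))"
      by (simp add: rhoc_pow omg_pow_one[OF assms(2)])
    also have "... \<longleftrightarrow> arctan_inv \<alpha> \<in> {real k * pi / real n | k::nat. 1 \<le> k \<and> k < n \<and> gcd k n = 1}"
    proof -
      have tb: "0 < arctan_inv \<alpha>" "arctan_inv \<alpha> \<le> pi/2" using theta_bounds[OF assms(2)] by auto
      show ?thesis by (rule nt[OF tb])
    qed
    finally show ?thesis .
  qed
  show ?thesis
  proof (intro conjI allI)
    fix m show "\<not> closed_with A (2 * m + 1)" by (rule i)
  next
    fix n show "closed_with A (2 * n) \<longleftrightarrow>
           arctan_inv \<alpha> \<in> {real k * pi / real n | k::nat. 1 \<le> k \<and> k < n \<and> gcd k n = 1}" by (rule ii)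
  qed
qed

end
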